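(* Let $p_0=1$, $p_1=1$, $p_2=2$ and $p_n=2p_{n-1}+p_{n-2}$ for $n\ge 3$. Then $|S_n(123,2143,3214)|=p_n$ for all $n\ge0$; equivalently $$\sum_{n\ge0}|S_n(123,2143,3214)|\,x^n=\frac{1-x-x^2}{1-2x-x^2}.$$ *)

theory Defs
  imports Main "HOL-Combinatorics.Multiset_Permutations"
begin

definition contains_pattern :: "nat list \<Rightarrow> nat list \<Rightarrow> bool" where
  "contains_pattern w s \<longleftrightarrow>
     (\<exists>idx :: nat \<Rightarrow> nat.
        strict_mono_on {..<length s} idx \<and>
        (\<forall>j<length s. idx j < length w) \<and>
        (\<forall>a<length s. \<forall>b<length s. (s ! a < s ! b \<longleftrightarrow> w ! (idx a) < w ! (idx b))))"

definition avoiders :: "nat \<Rightarrow> nat list set \<Rightarrow> nat list set" where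
  "avoiders n P = {w \<in> permutations_of_set {1..n}. \<forall>s\<in>P. \<not> contains_pattern w s}"

fun pseq :: "nat \<Rightarrow> nat" where
  "pseq 0 = 1"
| "pseq (Suc 0) = 1"
| "pseq (Suc (Suc 0)) = 2"
| "pseq (Suc (Suc (Suc n))) = 2 * pseq (Suc (Suc n)) + pseq (Suc n)"

end

theory Submission
  imports Defs
begin


definition c123 :: "nat list \<Rightarrow> bool" where
  "c123 w \<longleftrightarrow> (\<exists>i j k. i<j \<and> j<k \<and> k<length w \<and> w!i < w!j \<and> w!j < w!k)"
definition e123 :: "nat \<Rightarrow> nat list \<Rightarrow> bool" where
  "e123 x w \<longleftrightarrow> (\<exists>j k. j<k \<and> k<length w \<and> x < w!j \<and> w!j < w!k)"
definition c2143 :: "nat list \<Rightarrow> bool" where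
  "c2143 w \<longleftrightarrow> (\<exists>i j k l. i<j \<and> j<k \<and> k<l \<and> l<length w \<and> w!j < w!i \<and> w!i < w!l \<and> w!l < w!k)"
definition e2143 :: "nat \<Rightarrow> nat list \<Rightarrow> bool" where
  "e2143 x w \<longleftrightarrow> (\<exists>j k l. j<k \<and> k<l \<and> l<length w \<and> w!j < x \<and> x < w!l \<and> w!l < w!k)"
definition g2143 :: "nat \<Rightarrow> nat list \<Rightarrow> bool" where
  "g2143 x w \<longleftrightarrow> (\<exists>k l. k<l \<and> l<length w \<and> x < w!l \<and> w!l < w!k)"
definition c3214 :: "nat list \<Rightarrow> bool" where
  "c3214 w \<longleftrightarrow> (\<exists>i j k l. i<j \<and> j<k \<and> k<l \<and> l<length w \<and> w!k < w!j \<and> w!j < w!i \<and> w!i < w!l)"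
definition e3214 :: "nat \<Rightarrow> nat list \<Rightarrow> bool" where
  "e3214 x w \<longleftrightarrow> (\<exists>j k l. j<k \<and> k<l \<and> l<length w \<and> w!k < w!j \<and> w!j < x \<and> x < w!l)"
definition g3214 :: "nat \<Rightarrow> nat \<Rightarrow> nat list \<Rightarrow> bool" where
  "g3214 x y w \<longleftrightarrow> (\<exists>k l. k<l \<and> l<length w \<and> w!k < y \<and> x < w!l)"

lemma ex_less_Suc_len: "(\<exists>i<length (y#w). P i) \<longleftrightarrow> P 0 \<or> (\<exists>i<length w. P (Suc i))"
  by (auto simp: less_Suc_eq_0_disj)

lemma c123_Cons: "c123 (x#w) \<longleftrightarrow> c123 w \<or> e123 x w"
  unfolding c123_def e123_def
proof
  assume "\<exists>i j k. i < j \<and> j < k \<and> k < length (x # w) \<and> (x # w) ! i < (x # w) ! j \<and> (x # w) ! j < (x # w) ! k"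
  then obtain i j k where h: "i < j" "j < k" "k < length (x # w)" "(x # w) ! i < (x # w) ! j" "(x # w) ! j < (x # w) ! k" by blast
  obtain j' where j': "j = Suc j'" using h(1) by (cases j) auto
  obtain k' where k': "k = Suc k'" using h(1,2) by (cases k) auto
  note jk = j' k'
  show "(\<exists>i j k. i < j \<and> j < k \<and> k < length w \<and> w ! i < w ! j \<and> w ! j < w ! k) \<or>
    (\<exists>j k. j < k \<and> k < length w \<and> x < w ! j \<and> w ! j < w ! k)"
  proof (cases i)
    case 0 then show ?thesis using h jk by auto
  next
    case (Suc i') then show ?thesis using h jk by auto
  qed
next
  assume "(\<exists>i j k. i < j \<and> j < k \<and> k < length w \<and> w ! i < w ! j \<and> w ! j < w ! k) \<or>
    (\<exists>j k. j < k \<and> k < length w \<and> x < w ! j \<and> w ! j < w ! k)"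
  then show "\<exists>i j k. i < j \<and> j < k \<and> k < length (x # w) \<and> (x # w) ! i < (x # w) ! j \<and> (x # w) ! j < (x # w) ! k"
  proof
    assume "\<exists>i j k. i < j \<and> j < k \<and> k < length w \<and> w ! i < w ! j \<and> w ! j < w ! k"
    then obtain i j k where "i < j \<and> j < k \<and> k < length w \<and> w ! i < w ! j \<and> w ! j < w ! k" by blast
    then show ?thesis by (intro exI[of _ "Suc i"] exI[of _ "Suc j"] exI[of _ "Suc k"]) auto
  next
    assume "\<exists>j k. j < k \<and> k < length w \<and> x < w ! j \<and> w ! j < w ! k"
    then obtain j k where "j < k \<and> k < length w \<and> x < w ! j \<and> w ! j < w ! k" by blast
    then show ?thesis by (intro exI[of _ "0"] exI[of _ "Suc j"] exI[of _ "Suc k"]) auto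
  qed
qed

lemma e123_Cons: "e123 x (y#w) \<longleftrightarrow> e123 x w \<or> (x < y \<and> (\<exists>z\<in>set w. y < z))"
proof
  assume "e123 x (y#w)"
  then obtain j k where h: "j<k" "k<length (y#w)" "x < (y#w)!j" "(y#w)!j < (y#w)!k" unfolding e123_def by blast
  obtain k' where k': "k = Suc k'" using h(1) by (cases k) auto
  show "e123 x w \<or> (x < y \<and> (\<exists>z\<in>set w. y < z))"
  proof (cases j)
    case 0 then show ?thesis using h k' by auto
  next
    case (Suc j') then show ?thesis using h k' unfolding e123_def by auto
  qed
next
  assume "e123 x w \<or> (x < y \<and> (\<exists>z\<in>set w. y < z))"
  then show "e123 x (y#w)"
  proof
    assume "e123 x w"
    then obtain j k where "j<k \<and> k<length w \<and> x < w!j \<and> w!j < w!k" unfolding e123_def by blast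
    then show ?thesis unfolding e123_def by (intro exI[of _ "Suc j"] exI[of _ "Suc k"]) auto
  next
    assume "x < y \<and> (\<exists>z\<in>set w. y < z)"
    then obtain k where "x < y" "k < length w" "y < w!k" by (auto simp: in_set_conv_nth)
    then show ?thesis unfolding e123_def by (intro exI[of _ "0"] exI[of _ "Suc k"]) auto
  qed
qed

lemma c2143_Cons: "c2143 (x#w) \<longleftrightarrow> c2143 w \<or> e2143 x w"
proof
  assume "c2143 (x#w)"
  then obtain i j k l where h: "i<j" "j<k" "k<l" "l<length (x#w)" "(x#w)!j < (x#w)!i" "(x#w)!i < (x#w)!l" "(x#w)!l < (x#w)!k" unfolding c2143_def by blast
  obtain j' where j': "j = Suc j'" using h(1) by (cases j) auto
  obtain k' where k': "k = Suc k'" using h(1,2) by (cases k) auto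
  obtain l' where l': "l = Suc l'" using h(1,2,3) by (cases l) auto
  show "c2143 w \<or> e2143 x w"
  proof (cases i)
    case 0 then show ?thesis using h j' k' l' unfolding e2143_def by auto
  next
    case (Suc i') then show ?thesis using h j' k' l' unfolding c2143_def by auto
  qed
next
  assume "c2143 w \<or> e2143 x w"
  then show "c2143 (x#w)"
  proof
    assume "c2143 w"
    then obtain i j k l where "i<j \<and> j<k \<and> k<l \<and> l<length w \<and> w!j < w!i \<and> w!i < w!l \<and> w!l < w!k" unfolding c2143_def by blast
    then show ?thesis unfolding c2143_def by (intro exI[of _ "Suc i"] exI[of _ "Suc j"] exI[of _ "Suc k"] exI[of _ "Suc l"]) auto
  next
    assume "e2143 x w"
    then obtain j k l where "j<k \<and> k<l \<and> l<length w \<and> w!j < x \<and> x < w!l \<and> w!l < w!k" unfolding e2143_def by blast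
    then show ?thesis unfolding c2143_def by (intro exI[of _ "0"] exI[of _ "Suc j"] exI[of _ "Suc k"] exI[of _ "Suc l"]) auto
  qed
qed

lemma e2143_Cons: "e2143 x (y#w) \<longleftrightarrow> e2143 x w \<or> (y < x \<and> g2143 x w)"
proof
  assume "e2143 x (y#w)"
  then obtain j k l where h: "j<k" "k<l" "l<length (y#w)" "(y#w)!j < x" "x < (y#w)!l" "(y#w)!l < (y#w)!k" unfolding e2143_def by blast
  obtain k' where k': "k = Suc k'" using h(1) by (cases k) auto
  obtain l' where l': "l = Suc l'" using h(1,2) by (cases l) auto
  show "e2143 x w \<or> (y < x \<and> g2143 x w)"
  proof (cases j)
    case 0 then show ?thesis using h k' l' unfolding g2143_def by auto
  next
    case (Suc j') then show ?thesis using h k' l' unfolding e2143_def by auto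
  qed
next
  assume "e2143 x w \<or> (y < x \<and> g2143 x w)"
  then show "e2143 x (y#w)"
  proof
    assume "e2143 x w"
    then obtain j k l where "j<k \<and> k<l \<and> l<length w \<and> w!j < x \<and> x < w!l \<and> w!l < w!k" unfolding e2143_def by blast
    then show ?thesis unfolding e2143_def by (intro exI[of _ "Suc j"] exI[of _ "Suc k"] exI[of _ "Suc l"]) auto
  next
    assume "y < x \<and> g2143 x w"
    then obtain k l where "y < x" "k<l \<and> l<length w \<and> x < w!l \<and> w!l < w!k" unfolding g2143_def by blast
    then show ?thesis unfolding e2143_def by (intro exI[of _ "0"] exI[of _ "Suc k"] exI[of _ "Suc l"]) auto
  qed
qed

lemma g2143_Cons: "g2143 x (z#w) \<longleftrightarrow> g2143 x w \<or> (\<exists>t\<in>set w. x < t \<and> t < z)"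
proof
  assume "g2143 x (z#w)"
  then obtain k l where h: "k<l" "l<length (z#w)" "x < (z#w)!l" "(z#w)!l < (z#w)!k" unfolding g2143_def by blast
  obtain l' where l': "l = Suc l'" using h(1) by (cases l) auto
  show "g2143 x w \<or> (\<exists>t\<in>set w. x < t \<and> t < z)"
  proof (cases k)
    case 0 then show ?thesis using h l' by auto
  next
    case (Suc k') then show ?thesis using h l' unfolding g2143_def by auto
  qed
next
  assume "g2143 x w \<or> (\<exists>t\<in>set w. x < t \<and> t < z)"
  then show "g2143 x (z#w)"
  proof
    assume "g2143 x w"
    then obtain k l where "k<l \<and> l<length w \<and> x < w!l \<and> w!l < w!k" unfolding g2143_def by blast
    then show ?thesis unfolding g2143_def by (intro exI[of _ "Suc k"] exI[of _ "Suc l"]) auto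
  next
    assume "\<exists>t\<in>set w. x < t \<and> t < z"
    then obtain l where "l < length w" "x < w!l" "w!l < z" by (auto simp: in_set_conv_nth)
    then show ?thesis unfolding g2143_def by (intro exI[of _ "0"] exI[of _ "Suc l"]) auto
  qed
qed

lemma c3214_Cons: "c3214 (x#w) \<longleftrightarrow> c3214 w \<or> e3214 x w"
proof
  assume "c3214 (x#w)"
  then obtain i j k l where h: "i<j" "j<k" "k<l" "l<length (x#w)" "(x#w)!k < (x#w)!j" "(x#w)!j < (x#w)!i" "(x#w)!i < (x#w)!l" unfolding c3214_def by blast
  obtain j' where j': "j = Suc j'" using h(1) by (cases j) auto
  obtain k' where k': "k = Suc k'" using h(1,2) by (cases k) auto
  obtain l' where l': "l = Suc l'" using h(1,2,3) by (cases l) auto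
  show "c3214 w \<or> e3214 x w"
  proof (cases i)
    case 0 then show ?thesis using h j' k' l' unfolding e3214_def by auto
  next
    case (Suc i') then show ?thesis using h j' k' l' unfolding c3214_def by auto
  qed
next
  assume "c3214 w \<or> e3214 x w"
  then show "c3214 (x#w)"
  proof
    assume "c3214 w"
    then obtain i j k l where "i<j \<and> j<k \<and> k<l \<and> l<length w \<and> w!k < w!j \<and> w!j < w!i \<and> w!i < w!l" unfolding c3214_def by blast
    then show ?thesis unfolding c3214_def by (intro exI[of _ "Suc i"] exI[of _ "Suc j"] exI[of _ "Suc k"] exI[of _ "Suc l"]) auto
  next
    assume "e3214 x w"
    then obtain j k l where "j<k \<and> k<l \<and> l<length w \<and> w!k < w!j \<and> w!j < x \<and> x < w!l" unfolding e3214_def by blast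
    then show ?thesis unfolding c3214_def by (intro exI[of _ "0"] exI[of _ "Suc j"] exI[of _ "Suc k"] exI[of _ "Suc l"]) auto
  qed
qed

lemma e3214_Cons: "e3214 x (y#w) \<longleftrightarrow> e3214 x w \<or> (y < x \<and> g3214 x y w)"
proof
  assume "e3214 x (y#w)"
  then obtain j k l where h: "j<k" "k<l" "l<length (y#w)" "(y#w)!k < (y#w)!j" "(y#w)!j < x" "x < (y#w)!l" unfolding e3214_def by blast
  obtain k' where k': "k = Suc k'" using h(1) by (cases k) auto
  obtain l' where l': "l = Suc l'" using h(1,2) by (cases l) auto
  show "e3214 x w \<or> (y < x \<and> g3214 x y w)"
  proof (cases j)
    case 0 then show ?thesis using h k' l' unfolding g3214_def by auto
  next
    case (Suc j') then show ?thesis using h k' l' unfolding e3214_def by auto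
  qed
next
  assume "e3214 x w \<or> (y < x \<and> g3214 x y w)"
  then show "e3214 x (y#w)"
  proof
    assume "e3214 x w"
    then obtain j k l where "j<k \<and> k<l \<and> l<length w \<and> w!k < w!j \<and> w!j < x \<and> x < w!l" unfolding e3214_def by blast
    then show ?thesis unfolding e3214_def by (intro exI[of _ "Suc j"] exI[of _ "Suc k"] exI[of _ "Suc l"]) auto
  next
    assume "y < x \<and> g3214 x y w"
    then obtain k l where "y < x" "k<l \<and> l<length w \<and> w!k < y \<and> x < w!l" unfolding g3214_def by blast
    then show ?thesis unfolding e3214_def by (intro exI[of _ "0"] exI[of _ "Suc k"] exI[of _ "Suc l"]) auto
  qed
qed

lemma g3214_Cons: "g3214 x y (z#w) \<longleftrightarrow> g3214 x y w \<or> (z < y \<and> (\<exists>t\<in>set w. x < t))"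
proof
  assume "g3214 x y (z#w)"
  then obtain k l where h: "k<l" "l<length (z#w)" "(z#w)!k < y" "x < (z#w)!l" unfolding g3214_def by blast
  obtain l' where l': "l = Suc l'" using h(1) by (cases l) auto
  show "g3214 x y w \<or> (z < y \<and> (\<exists>t\<in>set w. x < t))"
  proof (cases k)
    case 0 then show ?thesis using h l' by auto
  next
    case (Suc k') then show ?thesis using h l' unfolding g3214_def by auto
  qed
next
  assume "g3214 x y w \<or> (z < y \<and> (\<exists>t\<in>set w. x < t))"
  then show "g3214 x y (z#w)"
  proof
    assume "g3214 x y w"
    then obtain k l where "k<l \<and> l<length w \<and> w!k < y \<and> x < w!l" unfolding g3214_def by blast
    then show ?thesis unfolding g3214_def by (intro exI[of _ "Suc k"] exI[of _ "Suc l"]) auto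
  next
    assume "z < y \<and> (\<exists>t\<in>set w. x < t)"
    then obtain l where "z < y" "l < length w" "x < w!l" by (auto simp: in_set_conv_nth)
    then show ?thesis unfolding g3214_def by (intro exI[of _ "0"] exI[of _ "Suc l"]) auto
  qed
qed

lemma bounded_no_ext:
  assumes "\<forall>z\<in>set w. z < x"
  shows "\<not> e123 x w" "\<not> e2143 x w" "\<not> g2143 x w" "\<not> e3214 x w" "\<not> g3214 x y w"
  using assms nth_mem unfolding e123_def e2143_def g2143_def e3214_def g3214_def
  by (fastforce dest: less_trans)+

definition avoid :: "nat list \<Rightarrow> bool" where
  "avoid w \<longleftrightarrow> \<not> c123 w \<and> \<not> c2143 w \<and> \<not> c3214 w"

lemma avoid_Cons: "avoid (x#w) \<longleftrightarrow> avoid w \<and> \<not> e123 x w \<and> \<not> e2143 x w \<and> \<not> e3214 x w"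
  unfolding avoid_def c123_Cons c2143_Cons c3214_Cons by blast

lemma F0: assumes "\<forall>z\<in>set v. z < N" shows "avoid (N#v) \<longleftrightarrow> avoid v"
  using bounded_no_ext[OF assms] by (simp add: avoid_Cons)

lemma F1: assumes "\<forall>z\<in>set (a#v). z < N" shows "avoid (a#N#v) \<longleftrightarrow> avoid (a#v)"
proof -
  have b: "\<forall>z\<in>set v. z < N" using assms by auto
  have "\<not> (\<exists>z\<in>set v. N < z)" using b by auto
  then show ?thesis using bounded_no_ext[OF b] assms
    by (simp add: avoid_Cons e123_Cons e2143_Cons e3214_Cons)
qed

lemma F2: assumes "\<forall>z\<in>set (b#v). z < x" "x < N" shows "avoid (x#b#N#v) \<longleftrightarrow> avoid (b#v)"
proof -
  have bv: "\<forall>z\<in>set v. z < x" using assms by auto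
  have bN: "\<forall>z\<in>set (b#v). z < N" using assms by auto
  have "\<not> (\<exists>z\<in>set v. N < z)" "\<not> (\<exists>z\<in>set v. x < z)" using bv assms(2) by auto
  then show ?thesis using bounded_no_ext[OF bv] assms F1[OF bN]
    by (simp add: avoid_Cons e123_Cons e2143_Cons e3214_Cons g2143_Cons g3214_Cons)
qed

lemma lt3: "(a::nat) < 3 \<longleftrightarrow> a = 0 \<or> a = 1 \<or> a = 2" by auto
lemma lt4: "(a::nat) < 4 \<longleftrightarrow> a = 0 \<or> a = 1 \<or> a = 2 \<or> a = 3" by auto
lemma all3: "(\<forall>a<(3::nat). P a) \<longleftrightarrow> P 0 \<and> P 1 \<and> P 2"
  unfolding lt3 by blast
lemma all4: "(\<forall>a<(4::nat). P a) \<longleftrightarrow> P 0 \<and> P 1 \<and> P 2 \<and> P 3"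
  unfolding lt4 by blast
lemma smo3: "strict_mono_on {..<3} (idx::nat\<Rightarrow>nat) \<longleftrightarrow> idx 0 < idx 1 \<and> idx 1 < idx (2::nat)"
proof
  assume "strict_mono_on {..<3} idx" then show "idx 0 < idx 1 \<and> idx 1 < idx (2::nat)"
    using strict_mono_onD[of "{..<3}" idx 0 1] strict_mono_onD[of "{..<3}" idx 1 2] by simp
next
  assume h: "idx 0 < idx 1 \<and> idx 1 < idx (2::nat)"
  show "strict_mono_on {..<3} idx"
  proof (rule strict_mono_onI)
    fix r s :: nat assume "r \<in> {..<3}" "s \<in> {..<3}" "r < s"
    moreover have "idx 0 < idx 2" using h by linarith
    ultimately show "idx r < idx s" using h unfolding lessThan_iff lt3 by auto
  qed
qed
lemma smo4: "strict_mono_on {..<4} (idx::nat\<Rightarrow>nat) \<longleftrightarrow> idx 0 < idx 1 \<and> idx 1 < idx (2::nat) \<and> idx 2 < idx 3"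
proof
  assume "strict_mono_on {..<4} idx" then show "idx 0 < idx 1 \<and> idx 1 < idx (2::nat) \<and> idx 2 < idx 3"
    using strict_mono_onD[of "{..<4}" idx 0 1] strict_mono_onD[of "{..<4}" idx 1 2] strict_mono_onD[of "{..<4}" idx 2 3] by simp
next
  assume h: "idx 0 < idx 1 \<and> idx 1 < idx (2::nat) \<and> idx 2 < idx 3"
  show "strict_mono_on {..<4} idx"
  proof (rule strict_mono_onI)
    fix r s :: nat assume "r \<in> {..<4}" "s \<in> {..<4}" "r < s"
    moreover have "idx 0 < idx 2" "idx 0 < idx 3" "idx 1 < idx 3" using h by linarith+
    ultimately show "idx r < idx s" using h unfolding lessThan_iff lt4 by auto
  qed
qed

lemma cp123: "contains_pattern w [1,2,3] \<longleftrightarrow> c123 w"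
proof
  assume "contains_pattern w [1,2,3]"
  then obtain idx where m: "strict_mono_on {..<length [1,2,3::nat]} idx" and l: "\<forall>j<length [1,2,3::nat]. idx j < length w"
    and v: "\<forall>a<length [1,2,3::nat]. \<forall>b<length [1,2,3::nat]. ([1,2,3::nat] ! a < [1,2,3] ! b \<longleftrightarrow> w ! (idx a) < w ! (idx b))"
    unfolding contains_pattern_def by (elim exE conjE) (rule that)
  have "w ! idx 0 < w ! idx 1" using v[rule_format, of 0 1] by simp
  moreover have "w ! idx 1 < w ! idx 2" using v[rule_format, of 1 2] by simp
  moreover have "idx 2 < length w" using l by simp
  moreover have "idx 0 < idx 1 \<and> idx 1 < idx 2"
  proof -
    have "length [1,2,3::nat] = 3" by simp
    then have "strict_mono_on {..<3} idx" using m by metis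
    then show ?thesis using smo3 by blast
  qed
  ultimately show "c123 w" unfolding c123_def by blast
next
  assume "c123 w"
  then obtain i j k where h: "i<j \<and> j<k \<and> k<length w \<and> w!i < w!j \<and> w!j < w!k" unfolding c123_def by blast
  show "contains_pattern w [1,2,3]" unfolding contains_pattern_def
  proof (rule exI[of _ "\<lambda>t. [i,j,k]!t"])
    have L: "length [1,2,3::nat] = 3" by simp
    show "strict_mono_on {..<length [1,2,3::nat]} (\<lambda>t. [i,j,k]!t) \<and>
      (\<forall>ja<length [1,2,3::nat]. [i,j,k]!ja < length w) \<and>
      (\<forall>a<length [1,2,3::nat]. \<forall>b<length [1,2,3::nat]. ([1,2,3::nat] ! a < [1,2,3] ! b \<longleftrightarrow> w ! ([i,j,k]!a) < w ! ([i,j,k]!b)))"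
      unfolding L smo3 all3 using h by simp
  qed
qed
lemma cp2143: "contains_pattern w [2,1,4,3] \<longleftrightarrow> c2143 w"
proof
  assume "contains_pattern w [2,1,4,3]"
  then obtain idx where m: "strict_mono_on {..<length [2,1,4,3::nat]} idx" and l: "\<forall>j<length [2,1,4,3::nat]. idx j < length w"
    and v: "\<forall>a<length [2,1,4,3::nat]. \<forall>b<length [2,1,4,3::nat]. ([2,1,4,3::nat] ! a < [2,1,4,3] ! b \<longleftrightarrow> w ! (idx a) < w ! (idx b))"
    unfolding contains_pattern_def by (elim exE conjE) (rule that)
  have "w ! idx 1 < w ! idx 0" using v[rule_format, of 1 0] by simp
  moreover have "w ! idx 0 < w ! idx 3" using v[rule_format, of 0 3] by simp
  moreover have "w ! idx 3 < w ! idx 2" using v[rule_format, of 3 2] by simp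
  moreover have "idx 3 < length w" using l by simp
  moreover have "idx 0 < idx 1 \<and> idx 1 < idx 2 \<and> idx 2 < idx 3"
  proof -
    have "length [2,1,4,3::nat] = 4" by simp
    then have "strict_mono_on {..<4} idx" using m by metis
    then show ?thesis using smo4 by blast
  qed
  ultimately show "c2143 w" unfolding c2143_def by (intro exI[of _ "idx 0"] exI[of _ "idx 1"] exI[of _ "idx 2"] exI[of _ "idx 3"]) simp
next
  assume "c2143 w"
  then obtain i j k l where h: "i<j \<and> j<k \<and> k<l \<and> l<length w \<and> w!j < w!i \<and> w!i < w!l \<and> w!l < w!k" unfolding c2143_def by blast
  show "contains_pattern w [2,1,4,3]" unfolding contains_pattern_def
  proof (rule exI[of _ "\<lambda>t. [i,j,k,l]!t"])
    have L: "length [2,1,4,3::nat] = 4" by simp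
    show "strict_mono_on {..<length [2,1,4,3::nat]} (\<lambda>t. [i,j,k,l]!t) \<and>
      (\<forall>ja<length [2,1,4,3::nat]. [i,j,k,l]!ja < length w) \<and>
      (\<forall>a<length [2,1,4,3::nat]. \<forall>b<length [2,1,4,3::nat]. ([2,1,4,3::nat] ! a < [2,1,4,3] ! b \<longleftrightarrow> w ! ([i,j,k,l]!a) < w ! ([i,j,k,l]!b)))"
      unfolding L smo4 all4 using h by simp
  qed
qed

lemma cp3214: "contains_pattern w [3,2,1,4] \<longleftrightarrow> c3214 w"
proof
  assume "contains_pattern w [3,2,1,4]"
  then obtain idx where m: "strict_mono_on {..<length [3,2,1,4::nat]} idx" and l: "\<forall>j<length [3,2,1,4::nat]. idx j < length w"
    and v: "\<forall>a<length [3,2,1,4::nat]. \<forall>b<length [3,2,1,4::nat]. ([3,2,1,4::nat] ! a < [3,2,1,4] ! b \<longleftrightarrow> w ! (idx a) < w ! (idx b))"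
    unfolding contains_pattern_def by (elim exE conjE) (rule that)
  have "w ! idx 2 < w ! idx 1" using v[rule_format, of 2 1] by simp
  moreover have "w ! idx 1 < w ! idx 0" using v[rule_format, of 1 0] by simp
  moreover have "w ! idx 0 < w ! idx 3" using v[rule_format, of 0 3] by simp
  moreover have "idx 3 < length w" using l by simp
  moreover have "idx 0 < idx 1 \<and> idx 1 < idx 2 \<and> idx 2 < idx 3"
  proof -
    have "length [3,2,1,4::nat] = 4" by simp
    then have "strict_mono_on {..<4} idx" using m by metis
    then show ?thesis using smo4 by blast
  qed
  ultimately show "c3214 w" unfolding c3214_def by (intro exI[of _ "idx 0"] exI[of _ "idx 1"] exI[of _ "idx 2"] exI[of _ "idx 3"]) simp
next
  assume "c3214 w"
  then obtain i j k l where h: "i<j \<and> j<k \<and> k<l \<and> l<length w \<and> w!k < w!j \<and> w!j < w!i \<and> w!i < w!l" unfolding c3214_def by blast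
  show "contains_pattern w [3,2,1,4]" unfolding contains_pattern_def
  proof (rule exI[of _ "\<lambda>t. [i,j,k,l]!t"])
    have L: "length [3,2,1,4::nat] = 4" by simp
    show "strict_mono_on {..<length [3,2,1,4::nat]} (\<lambda>t. [i,j,k,l]!t) \<and>
      (\<forall>ja<length [3,2,1,4::nat]. [i,j,k,l]!ja < length w) \<and>
      (\<forall>a<length [3,2,1,4::nat]. \<forall>b<length [3,2,1,4::nat]. ([3,2,1,4::nat] ! a < [3,2,1,4] ! b \<longleftrightarrow> w ! ([i,j,k,l]!a) < w ! ([i,j,k,l]!b)))"
      unfolding L smo4 all4 using h by simp
  qed
qed


lemma avoiders_eq: "avoiders n {[1,2,3], [2,1,4,3], [3,2,1,4]} = {w \<in> permutations_of_set {1..n}. avoid w}"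
  unfolding avoiders_def avoid_def by (simp del: One_nat_def add: cp123 cp2143 cp3214)


definition AA :: "nat \<Rightarrow> nat list set" where
  "AA n = {w \<in> permutations_of_set {1..n}. avoid w}"

lemma AA_D: "w \<in> AA n \<Longrightarrow> set w = {1..n} \<and> distinct w \<and> avoid w"
  unfolding AA_def permutations_of_set_def by auto

lemma AA_I: "set w = {1..n} \<Longrightarrow> distinct w \<Longrightarrow> avoid w \<Longrightarrow> w \<in> AA n"
  unfolding AA_def permutations_of_set_def by auto

lemma short_avoid: "length w \<le> 2 \<Longrightarrow> avoid w"
  unfolding avoid_def c123_def c2143_def c3214_def by auto

lemma AA_small: "n \<le> 2 \<Longrightarrow> AA n = permutations_of_set {1..n}"
  unfolding AA_def using short_avoid length_finite_permutations_of_set by fastforce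

lemma set_del1: "distinct (x#r) \<Longrightarrow> set r = set (x#r) - {x}" by auto
lemma set_del2: "distinct (x#y#r) \<Longrightarrow> set (x#r) = set (x#y#r) - {y}" by auto
lemma set_del3: "distinct (x#y#z#r) \<Longrightarrow> set (y#r) = set (x#y#z#r) - {x,z}" by auto
lemma int_del1: "{1..Suc k} - {Suc k} = {1..k}" by auto
lemma int_del2: "{1..Suc (Suc k)} - {Suc (Suc k), Suc k} = {1..k}" by auto
lemma int_del2': "{1..Suc (Suc k)} - {Suc k, Suc (Suc k)} = {1..k}" by auto

lemma int_ins: "insert (Suc k) {1..k} = {1..Suc k}" by auto

lemma decomp:
  fixes m :: nat
  defines "N \<equiv> Suc (Suc (Suc m))"
  shows "AA N = ((\<lambda>v. N # v) ` AA (Suc (Suc m)) \<union> (\<lambda>v. hd v # N # tl v) ` AA (Suc (Suc m)))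
               \<union> (\<lambda>v. Suc (Suc m) # hd v # N # tl v) ` AA (Suc m)"
proof (rule antisym)
  show "AA N \<subseteq> ((\<lambda>v. N # v) ` AA (Suc (Suc m)) \<union> (\<lambda>v. hd v # N # tl v) ` AA (Suc (Suc m)))
               \<union> (\<lambda>v. Suc (Suc m) # hd v # N # tl v) ` AA (Suc m)"
  proof
    fix w assume "w \<in> AA N"
    then have sw: "set w = {1..N}" and dw: "distinct w" and aw: "avoid w" using AA_D by auto
    have Nin: "N \<in> set w" using sw by (simp add: N_def)
    obtain x w1 where w: "w = x # w1" using Nin by (cases w) auto
    show "w \<in> ((\<lambda>v. N # v) ` AA (Suc (Suc m)) \<union> (\<lambda>v. hd v # N # tl v) ` AA (Suc (Suc m)))
               \<union> (\<lambda>v. Suc (Suc m) # hd v # N # tl v) ` AA (Suc m)"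
    proof (cases "x = N")
      case True
      have "set w1 = set (x#w1) - {x}" using set_del1[of x w1] dw w by blast
      also have "\<dots> = {1..N} - {N}" using sw w True by simp
      also have "\<dots> = {1..Suc (Suc m)}" unfolding N_def by (rule int_del1)
      finally have sw1: "set w1 = {1..Suc (Suc m)}" .
      moreover have "avoid w1"
      proof -
        have "\<forall>z\<in>set w1. z < N" using sw1 by (auto simp: N_def)
        then show ?thesis using aw w True F0[of w1 N] by simp
      qed
      moreover have "distinct w1" using dw w by simp
      ultimately have "w1 \<in> AA (Suc (Suc m))" using AA_I by blast
      then have "w \<in> (\<lambda>v. N # v) ` AA (Suc (Suc m))" using image_eqI[of w "\<lambda>v. N # v" w1] w True by blast
      then show ?thesis by (rule UnI1[OF UnI1])
    next
      case xN: False
      obtain y w2 where w1: "w1 = y # w2" using Nin w xN by (cases w1) auto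
      show ?thesis
      proof (cases "y = N")
        case True
        have "set (x # w2) = set (x#y#w2) - {y}" using set_del2[of x y w2] dw w w1 by blast
        also have "\<dots> = {1..N} - {N}" using sw w w1 True by simp
        also have "\<dots> = {1..Suc (Suc m)}" unfolding N_def by (rule int_del1)
        finally have sw1: "set (x # w2) = {1..Suc (Suc m)}" .
        moreover have "avoid (x # w2)"
        proof -
          have "\<forall>z\<in>set (x#w2). z < N" using sw1 by (auto simp: N_def)
          then show ?thesis using aw w w1 True F1[of x w2 N] by simp
        qed
        moreover have "distinct (x # w2)" using dw w w1 by auto
        ultimately have "x # w2 \<in> AA (Suc (Suc m))" using AA_I by blast
        moreover have "w = (\<lambda>v. hd v # N # tl v) (x # w2)" using w w1 True by simp
        ultimately have "w \<in> (\<lambda>v. hd v # N # tl v) ` AA (Suc (Suc m))" by (rule rev_image_eqI)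
        then show ?thesis by (rule UnI1[OF UnI2])
      next
        case yN: False
        have Nin2: "N \<in> set w2" using Nin w w1 xN yN by auto
        have "x \<in> set w" "y \<in> set w" using w w1 by auto
        then have "x \<le> N" "y \<le> N" using sw by auto
        then have xle: "x < N" "y < N" using xN yN by auto
        have yx: "y < x"
        proof (rule ccontr)
          assume "\<not> y < x"
          then have "x < y" using dw w w1 by auto
          then have "e123 x (y#w2)" using Nin2 xle unfolding e123_Cons by blast
          then have "c123 w" unfolding w w1 c123_Cons by blast
          then show False using aw avoid_def by auto
        qed
        obtain z w3 where w2: "w2 = z # w3" using Nin2 by (cases w2) auto
        have zN: "z = N"
        proof (rule ccontr)
          assume zN: "z \<noteq> N"
          then have Nin3: "N \<in> set w3" using Nin2 w2 by auto
          have "z \<in> set w" using w w1 w2 by auto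
          then have "z \<le> N" using sw by auto
          then have zle: "z < N" using zN by auto
          have "y \<noteq> z" using dw w w1 w2 by auto
          then consider "y < z" | "z < y" by linarith
          then show False
          proof cases
            case 1
            then have "e123 y (z#w3)" using Nin3 zle unfolding e123_Cons by blast
            then have "c123 w" unfolding w w1 w2 c123_Cons by blast
            then show False using aw avoid_def by auto
          next
            case 2
            then have "g3214 x y (z#w3)" using Nin3 xle unfolding g3214_Cons by blast
            then have "e3214 x (y#z#w3)" using yx unfolding e3214_Cons by blast
            then have "c3214 w" unfolding w w1 w2 c3214_Cons by blast
            then show False using aw avoid_def by auto
          qed
        qed
        have xv: "x = Suc (Suc m)"
        proof (rule ccontr)
          assume xv: "x \<noteq> Suc (Suc m)"
          have "Suc (Suc m) \<in> set w" using sw by (auto simp: N_def)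
          moreover have "x < Suc (Suc m)" using xv xle by (simp add: N_def)
          moreover have "y \<noteq> Suc (Suc m)" using yx calculation(2) by simp
          moreover have "N \<noteq> Suc (Suc m)" by (simp add: N_def)
          ultimately have "Suc (Suc m) \<in> set w3" "x < Suc (Suc m)" using xv unfolding w w1 w2 zN by auto
          moreover have "Suc (Suc m) < N" by (simp add: N_def)
          ultimately have "g2143 x (N#w3)" unfolding g2143_Cons by blast
          then have "e2143 x (y#N#w3)" using yx unfolding e2143_Cons by blast
          then have "c2143 w" unfolding w w1 w2 zN c2143_Cons by blast
          then show False using aw avoid_def by auto
        qed
        have "set (y # w3) = set (x#y#z#w3) - {x,z}" using set_del3[of x y z w3] dw w w1 w2 by blast
        also have "\<dots> = {1..N} - {Suc (Suc m), N}" using sw w w1 w2 zN xv by simp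
        also have "\<dots> = {1..Suc m}" unfolding N_def by (rule int_del2')
        finally have sw1: "set (y # w3) = {1..Suc m}" .
        moreover have "avoid (y # w3)"
        proof -
          have "\<forall>z\<in>set (y#w3). z < x" using sw1 xv by auto
          moreover have "x < N" using xv by (simp add: N_def)
          ultimately show ?thesis using aw w w1 w2 zN F2[of y w3 x N] by simp
        qed
        moreover have "distinct (y # w3)" using dw w w1 w2 by auto
        ultimately have "y # w3 \<in> AA (Suc m)" using AA_I by blast
        moreover have "w = (\<lambda>v. Suc (Suc m) # hd v # N # tl v) (y # w3)" using w w1 w2 zN xv by simp
        ultimately have "w \<in> (\<lambda>v. Suc (Suc m) # hd v # N # tl v) ` AA (Suc m)" by (rule rev_image_eqI)
        then show ?thesis by (rule UnI2)
      qed
    qed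
  qed
next
  show "((\<lambda>v. N # v) ` AA (Suc (Suc m)) \<union> (\<lambda>v. hd v # N # tl v) ` AA (Suc (Suc m)))
               \<union> (\<lambda>v. Suc (Suc m) # hd v # N # tl v) ` AA (Suc m) \<subseteq> AA N"
  proof (intro Un_least image_subsetI)
    fix v assume "v \<in> AA (Suc (Suc m))"
    then have sv: "set v = {1..Suc (Suc m)}" and dv: "distinct v" and av: "avoid v" using AA_D by auto
    have b: "\<forall>z\<in>set v. z < N" using sv by (auto simp: N_def)
    have "set (N # v) = insert N {1..Suc (Suc m)}" using sv by simp
    also have "\<dots> = {1..N}" unfolding N_def by (rule int_ins)
    finally have "set (N # v) = {1..N}" .
    moreover have "distinct (N # v)" using dv b by auto
    moreover have "avoid (N # v)" using F0[OF b] av by simp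
    ultimately show "N # v \<in> AA N" using AA_I by blast
  next
    fix v assume "v \<in> AA (Suc (Suc m))"
    then have sv: "set v = {1..Suc (Suc m)}" and dv: "distinct v" and av: "avoid v" using AA_D by auto
    obtain a v' where v: "v = a # v'" using sv by (cases v) auto
    have b: "\<forall>z\<in>set (a#v'). z < N" using sv v by (auto simp: N_def)
    have "set (hd v # N # tl v) = insert N (set v)" using v by auto
    also have "\<dots> = {1..N}" unfolding N_def sv by (rule int_ins)
    finally have "set (hd v # N # tl v) = {1..N}" .
    moreover have "distinct (hd v # N # tl v)" using dv b v by auto
    moreover have "avoid (hd v # N # tl v)" using F1[OF b] av v by simp
    ultimately show "hd v # N # tl v \<in> AA N" using AA_I by blast
  next
    fix v assume "v \<in> AA (Suc m)"
    then have sv: "set v = {1..Suc m}" and dv: "distinct v" and av: "avoid v" using AA_D by auto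
    obtain a v' where v: "v = a # v'" using sv by (cases v) auto
    have b: "\<forall>z\<in>set (a#v'). z < Suc (Suc m)" using sv v by auto
    have xN: "Suc (Suc m) < N" by (simp add: N_def)
    have "set (Suc (Suc m) # hd v # N # tl v) = insert N (insert (Suc (Suc m)) (set v))" using v by auto
    also have "\<dots> = {1..N}" unfolding N_def sv int_ins by (rule refl)
    finally have "set (Suc (Suc m) # hd v # N # tl v) = {1..N}" .
    moreover have "distinct (Suc (Suc m) # hd v # N # tl v)" using dv b v xN by auto
    moreover have "avoid (Suc (Suc m) # hd v # N # tl v)" using F2[OF b xN] av v by simp
    ultimately show "Suc (Suc m) # hd v # N # tl v \<in> AA N" using AA_I by blast
  qed
qed


lemma finite_AA: "finite (AA n)"
  unfolding AA_def by simp

lemma AA_ne: "w \<in> AA (Suc k) \<Longrightarrow> w \<noteq> []"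
  using AA_D by fastforce

lemma card_rec: "card (AA (Suc (Suc (Suc m)))) = 2 * card (AA (Suc (Suc m))) + card (AA (Suc m))"
proof -
  define N where "N = Suc (Suc (Suc m))"
  let ?X = "(\<lambda>v. N # v) ` AA (Suc (Suc m))"
  let ?Y = "(\<lambda>v. hd v # N # tl v) ` AA (Suc (Suc m))"
  let ?Z = "(\<lambda>v. Suc (Suc m) # hd v # N # tl v) ` AA (Suc m)"
  have d: "AA N = (?X \<union> ?Y) \<union> ?Z" unfolding N_def by (rule decomp)
  have i1: "inj_on (\<lambda>v. N # v) (AA (Suc (Suc m)))" by (auto intro: inj_onI)
  have i2: "inj_on (\<lambda>v. hd v # N # tl v) (AA (Suc (Suc m)))"
  proof (rule inj_onI)
    fix u v assume "u \<in> AA (Suc (Suc m))" "v \<in> AA (Suc (Suc m))" "hd u # N # tl u = hd v # N # tl v"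
    then show "u = v" using AA_ne by (metis list.collapse list.inject)
  qed
  have i3: "inj_on (\<lambda>v. Suc (Suc m) # hd v # N # tl v) (AA (Suc m))"
  proof (rule inj_onI)
    fix u v assume "u \<in> AA (Suc m)" "v \<in> AA (Suc m)" "Suc (Suc m) # hd u # N # tl u = Suc (Suc m) # hd v # N # tl v"
    then show "u = v" using AA_ne by (metis list.collapse list.inject)
  qed
  have hdb: "hd v \<le> k" if "v \<in> AA k" "v \<noteq> []" for v k
  proof -
    have "hd v \<in> set v" using that(2) by simp
    then show ?thesis using AA_D[OF that(1)] by auto
  qed
  have dXY: "?X \<inter> ?Y = {}"
  proof -
    have "hd v \<noteq> N" if "v \<in> AA (Suc (Suc m))" for v
      using hdb[OF that AA_ne[OF that]] by (simp add: N_def)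
    then show ?thesis by auto
  qed
  have dXYZ: "(?X \<union> ?Y) \<inter> ?Z = {}"
  proof -
    have "hd v \<noteq> N" if "v \<in> AA (Suc m)" for v
      using hdb[OF that AA_ne[OF that]] by (simp add: N_def)
    then show ?thesis by (auto simp: N_def)
  qed
  have "card (AA N) = card (?X \<union> ?Y) + card ?Z"
    unfolding d by (rule card_Un_disjoint) (use finite_AA dXYZ in auto)
  also have "card (?X \<union> ?Y) = card ?X + card ?Y"
    by (rule card_Un_disjoint) (use finite_AA dXY in auto)
  also have "card ?X = card (AA (Suc (Suc m)))" by (rule card_image[OF i1])
  also have "card ?Y = card (AA (Suc (Suc m)))" by (rule card_image[OF i2])
  also have "card ?Z = card (AA (Suc m))" by (rule card_image[OF i3])
  finally show ?thesis unfolding N_def by simp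
qed

lemma card_AA: "card (AA n) = pseq n"
proof (induction n rule: pseq.induct)
  case 1 then show ?case by (simp add: AA_small)
next
  case 2 then show ?case by (simp add: AA_small)
next
  case 3 then show ?case by (simp add: AA_small numeral_2_eq_2)
next
  case (4 n) then show ?case using card_rec[of n] by simp
qed

theorem mainTheorem6:
  fixes n :: nat
  shows "card (avoiders n {[1,2,3], [2,1,4,3], [3,2,1,4]}) = pseq n"
  using card_AA[of n] unfolding avoiders_eq AA_def .


end
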